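(* Let $d\ge 6$, $c\in[d]$, and let $\mathcal{F}\subseteq 2^{[n]}$ be a hereditary family with $\delta(\mathcal{F})\ge 2^{d-1}-c+1$. Then every bad vertex $x$ is contained in exactly one pile, namely $N(x)$. In particular, every vertex of $[n]$ that is not contained in any pile is good.
   Context: A family $\mathcal{F}\subseteq 2^{[n]}$ is hereditary if $F'\subseteq F\in\mathcal{F}$ implies $F'\in\mathcal{F}$. $d_{\mathcal{F}}(x)=|\{F\in\mathcal{F}:x\in F\}|$, $\delta(\mathcal{F})=\min_x d_{\mathcal{F}}(x)$, $N(x)=\bigcup_{x\in F\in\mathcal{F}}F$. Under the hypothesis $\delta(\mathcal{F})\ge 2^{d-1}-c+1$ every vertex has $|N(x)|\ge d$; a vertex $x$ is good if $|N(x)|\ge d+1$ and bad if $|N(x)|=d$. A set $P\subseteq[n]$ with $|P|=d$ is a pile of $\mathcal{F}$ if $P\subseteq N(y)$ for every $y\in P$, and there exists $z\in P$ with $N(z)=P$. *)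

theory Defs
  imports Main
begin

definition hereditary :: "nat set set \<Rightarrow> bool" where
  "hereditary F \<longleftrightarrow> (\<forall>A B. A \<subseteq> B \<and> B \<in> F \<longrightarrow> A \<in> F)"

definition deg :: "nat set set \<Rightarrow> nat \<Rightarrow> nat" where
  "deg F x = card {A \<in> F. x \<in> A}"

definition mindeg :: "nat set set \<Rightarrow> nat \<Rightarrow> nat" where
  "mindeg F n = Min (deg F ` {1..n})"

definition nbhd :: "nat set set \<Rightarrow> nat \<Rightarrow> nat set" where
  "nbhd F x = \<Union> {A \<in> F. x \<in> A}"

definition good :: "nat set set \<Rightarrow> nat \<Rightarrow> nat \<Rightarrow> bool" where
  "good F d x \<longleftrightarrow> card (nbhd F x) \<ge> d + 1"

definition bad :: "nat set set \<Rightarrow> nat \<Rightarrow> nat \<Rightarrow> bool" where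
  "bad F d x \<longleftrightarrow> card (nbhd F x) = d"

definition pile :: "nat set set \<Rightarrow> nat \<Rightarrow> nat \<Rightarrow> nat set \<Rightarrow> bool" where
  "pile F n d P \<longleftrightarrow> P \<subseteq> {1..n} \<and> card P = d \<and> (\<forall>y\<in>P. P \<subseteq> nbhd F y)
     \<and> (\<exists>z\<in>P. nbhd F z = P)"

end

theory Submission
  imports Defs
begin

lemma card_supsets:
  assumes "finite N" "T \<subseteq> N"
  shows "card {A. T \<subseteq> A \<and> A \<subseteq> N} = 2 ^ (card N - card T)"
proof -
  have eq: "{A. T \<subseteq> A \<and> A \<subseteq> N} = (\<lambda>B. B \<union> T) ` Pow (N - T)"
  proof
    show "{A. T \<subseteq> A \<and> A \<subseteq> N} \<subseteq> (\<lambda>B. B \<union> T) ` Pow (N - T)"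
    proof
      fix A assume "A \<in> {A. T \<subseteq> A \<and> A \<subseteq> N}"
      then have "A = (A - T) \<union> T" "A - T \<in> Pow (N - T)" by auto
      then show "A \<in> (\<lambda>B. B \<union> T) ` Pow (N - T)" by blast
    qed
  qed (use assms in auto)
  have inj: "inj_on (\<lambda>B. B \<union> T) (Pow (N - T))"
    by (rule inj_onI) blast
  have "card {A. T \<subseteq> A \<and> A \<subseteq> N} = card (Pow (N - T))"
    unfolding eq by (rule card_image[OF inj])
  also have "\<dots> = 2 ^ card (N - T)" using assms by (simp add: card_Pow)
  also have "card (N - T) = card N - card T"
    using assms by (meson card_Diff_subset finite_subset)
  finally show ?thesis .
qed

lemma pow_bound: "6 \<le> d \<Longrightarrow> d \<le> (2::nat) ^ (d - 3)"
proof -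
  assume "6 \<le> d"
  then obtain k where k: "d = k + 6" by (metis add.commute le_Suc_ex)
  have "k + 6 \<le> (2::nat) ^ (k + 3)"
  proof (induction k)
    case (Suc k)
    have "(2::nat) ^ (Suc k + 3) = 2 * 2 ^ (k + 3)" by (simp add: power_Suc[symmetric])
    then show ?case using Suc by linarith
  qed simp
  then show ?thesis using k by (simp add: add.commute)
qed

lemma count_missing:
  assumes "finite N" "x \<in> T" "T \<subseteq> N" "Fx \<subseteq> {A. {x} \<subseteq> A \<and> A \<subseteq> N}"
    "\<forall>A\<in>Fx. \<not> T \<subseteq> A"
  shows "card Fx + 2 ^ (card N - card T) \<le> 2 ^ (card N - 1)"
proof -
  let ?S = "{A. T \<subseteq> A \<and> A \<subseteq> N}"
  have dis: "Fx \<inter> ?S = {}" using assms(5) by auto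
  have sub: "Fx \<union> ?S \<subseteq> {A. {x} \<subseteq> A \<and> A \<subseteq> N}" using assms by auto
  have fin: "finite {A. {x} \<subseteq> A \<and> A \<subseteq> N}" using assms(1) by auto
  have "card Fx + card ?S = card (Fx \<union> ?S)"
    using dis fin sub by (metis card_Un_disjoint finite_Un finite_subset)
  also have "\<dots> \<le> card {A. {x} \<subseteq> A \<and> A \<subseteq> N}" using fin sub card_mono by blast
  also have "\<dots> = 2 ^ (card N - 1)" using card_supsets[of N "{x}"] assms by auto
  finally show ?thesis using card_supsets[OF assms(1,3)] by simp
qed

lemma arith_aux:
  fixes D a a' b c d :: nat
  assumes "D + a' \<le> b2" "a \<le> a'" "b2 - c + 1 \<le> D" "d \<le> a" "c \<le> d" "a \<le> b" "2 * b = b2"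
  shows False
  using assms by linarith

lemma arith_aux2:
  fixes D a b c d :: nat
  assumes "D \<le> b" "b2 - c + 1 \<le> D" "d \<le> a" "c \<le> d" "a \<le> b" "2 * b = b2"
  shows False
  using assms by linarith

theorem mainTheorem13:
  fixes n d c :: nat and F :: "nat set set"
  assumes "d \<ge> 6" and "1 \<le> c" and "c \<le> d"
    and "F \<subseteq> Pow {1..n}" and "hereditary F"
    and "mindeg F n \<ge> 2 ^ (d - 1) - c + 1"
  shows "(\<forall>x\<in>{1..n}. bad F d x \<longrightarrow>
            x \<in> nbhd F x \<and> pile F n d (nbhd F x) \<and>
            (\<forall>P. pile F n d P \<and> x \<in> P \<longrightarrow> P = nbhd F x))
       \<and> (\<forall>x\<in>{1..n}. (\<forall>P. pile F n d P \<longrightarrow> x \<notin> P) \<longrightarrow> good F d x)"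
proof -
  have finF: "finite F" using assms(4) by (meson finite_Pow_iff finite_atLeastAtMost finite_subset)
  have pb: "d \<le> 2 ^ (d - 3)" using pow_bound assms(1) by blast
  have p1: "2 ^ (d - 3) \<le> (2::nat) ^ (d - 2)" by (rule power_increasing) auto
  have p2: "2 * 2 ^ (d - 2) = (2::nat) ^ (d - 1)"
  proof -
    have "d - 1 = Suc (d - 2)" using assms(1) by simp
    then show ?thesis by (simp only: power_Suc)
  qed
  have degx: "deg F x \<ge> 2 ^ (d - 1) - c + 1" if "x \<in> {1..n}" for x
  proof -
    have "mindeg F n \<le> deg F x" unfolding mindeg_def using that by simp
    then show ?thesis using assms(6) by linarith
  qed
  have Nsub: "nbhd F x \<subseteq> {1..n}" for x using assms(4) unfolding nbhd_def by auto
  have Nfin: "finite (nbhd F x)" for x using Nsub finite_subset by blast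
  have Fxsub: "{A \<in> F. x \<in> A} \<subseteq> {A. {x} \<subseteq> A \<and> A \<subseteq> nbhd F x}" for x
    unfolding nbhd_def by auto
  have xin: "x \<in> nbhd F x" if "x \<in> {1..n}" for x
  proof -
    have "deg F x > 0" using degx[OF that] by linarith
    then have "{A \<in> F. x \<in> A} \<noteq> {}" unfolding deg_def by (metis card.empty less_irrefl)
    then show ?thesis unfolding nbhd_def by auto
  qed
  have geq: "card (nbhd F x) \<ge> d" if "x \<in> {1..n}" for x
  proof (rule ccontr)
    assume "\<not> d \<le> card (nbhd F x)"
    then have lt: "card (nbhd F x) - 1 \<le> d - 2" by linarith
    have "deg F x \<le> card {A. {x} \<subseteq> A \<and> A \<subseteq> nbhd F x}"
      unfolding deg_def using Nfin[of x] by (intro card_mono[OF _ Fxsub]) auto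
    also have "\<dots> = 2 ^ (card (nbhd F x) - 1)"
      using card_supsets[OF Nfin[of x], of "{x}"] xin[OF that] by simp
    also have "\<dots> \<le> 2 ^ (d - 2)" using lt by (intro power_increasing) auto
    finally show False using arith_aux2[OF _ degx[OF that] pb assms(3) p1 p2] by blast
  qed
  have tri: "\<exists>A\<in>F. {x, y, z} \<subseteq> A"
    if x: "x \<in> {1..n}" and b: "bad F d x" and y: "y \<in> nbhd F x" and z: "z \<in> nbhd F x" for x y z
  proof (rule ccontr)
    assume nA: "\<not> (\<exists>A\<in>F. {x, y, z} \<subseteq> A)"
    have cN: "card (nbhd F x) = d" using b unfolding bad_def by simp
    have ct: "card {x, y, z} \<le> 3" by (simp add: card_insert_if)
    have "deg F x + 2 ^ (card (nbhd F x) - card {x, y, z}) \<le> 2 ^ (card (nbhd F x) - 1)"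
      unfolding deg_def
      by (rule count_missing[OF Nfin _ _ Fxsub]) (use xin[OF x] y z nA in auto)
    then have "deg F x + 2 ^ (d - card {x, y, z}) \<le> 2 ^ (d - 1)" by (simp only: cN)
    moreover have "2 ^ (d - 3) \<le> (2::nat) ^ (d - card {x, y, z})"
      using ct by (intro power_increasing) auto
    ultimately show False using arith_aux[OF _ _ degx[OF x] pb assms(3) p1 p2] by blast
  qed
  have part1: "x \<in> nbhd F x \<and> pile F n d (nbhd F x) \<and>
            (\<forall>P. pile F n d P \<and> x \<in> P \<longrightarrow> P = nbhd F x)"
    if x: "x \<in> {1..n}" and b: "bad F d x" for x
  proof -
    have cN: "card (nbhd F x) = d" using b unfolding bad_def by simp
    have "nbhd F x \<subseteq> nbhd F y" if yN: "y \<in> nbhd F x" for y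
    proof
      fix z assume zN: "z \<in> nbhd F x"
      obtain A where "A \<in> F" "{x, y, z} \<subseteq> A" using tri[OF x b yN zN] by blast
      then show "z \<in> nbhd F y" unfolding nbhd_def by auto
    qed
    then have pl: "pile F n d (nbhd F x)"
      unfolding pile_def using Nsub[of x] cN xin[OF x] by auto
    have "P = nbhd F x" if "pile F n d P" "x \<in> P" for P
    proof -
      have "P \<subseteq> nbhd F x" "card P = d" using that unfolding pile_def by auto
      then show ?thesis using cN Nfin[of x] card_subset_eq[of "nbhd F x" P] by simp
    qed
    then show ?thesis using pl xin[OF x] by blast
  qed
  have part2: "good F d x" if x: "x \<in> {1..n}" and np: "\<forall>P. pile F n d P \<longrightarrow> x \<notin> P" for x
  proof (rule ccontr)
    assume "\<not> good F d x"
    then have "bad F d x" using geq[OF x] unfolding good_def bad_def by simp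
    then show False using part1[OF x] np xin[OF x] by metis
  qed
  show ?thesis using part1 part2 by blast
qed

end
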